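(* In the Bell scenario with $\mathcal{X}=\mathcal{Y}=\mathcal{A}=\mathcal{B}=\{0,1\}$, the conditional distribution $p^H$ defined by $p^H(00|00)=\tfrac{5\sqrt5-11}{2}$, $p^H(01|00)=p^H(10|00)=\tfrac{7-3\sqrt5}{2}$, $p^H(11|00)=\tfrac{\sqrt5-1}{2}$; $p^H(00|01)=\sqrt5-2$, $p^H(01|01)=0$, $p^H(10|01)=\tfrac{7-3\sqrt5}{2}$, $p^H(11|01)=\tfrac{\sqrt5-1}{2}$; $p^H(00|10)=\sqrt5-2$, $p^H(01|10)=\tfrac{7-3\sqrt5}{2}$, $p^H(10|10)=0$, $p^H(11|10)=\tfrac{\sqrt5-1}{2}$; $p^H(00|11)=0$, $p^H(01|11)=p^H(10|11)=\tfrac{3-\sqrt5}{2}$, $p^H(11|11)=\sqrt5-2$ (where $p^H(ab|xy)$ is listed as $p^H(ab|xy)$ with the pair $xy$ after the bar) belongs to $\mathcal{P}_2^{AB,(1/4,1/4)}$. Consequently, for any $0<l\le h$ and any distribution $p_{XY}$ with $l\le p_{XY}(xy)\le h$ for all $x,y$, the joint behavior $p_{XY}(xy)\,p^H(ab|xy)$ lies in the $(l,h,1/4,1/4)$-MDPDL set.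
   Context: $\mathcal{P}_2^{AB,(\epsilon_A,\epsilon_B)}$ denotes the set of all conditional distributions $p=(p(ab|xy))$ for which there exist a probability space $(\Lambda,q)$ and distributions $p_A(\cdot|x,y,\lambda)$ on $\mathcal{A}$, $p_B(\cdot|x,y,\lambda)$ on $\mathcal{B}$ with $p(ab|xy)=\int q(d\lambda)p_A(a|xy\lambda)p_B(b|xy\lambda)$, $\frac12\sum_a|p_A(a|xy\lambda)-p_A(a|xy'\lambda)|\le\epsilon_A$ for all $x,y,y',\lambda$, and $\frac12\sum_b|p_B(b|xy\lambda)-p_B(b|x'y\lambda)|\le\epsilon_B$ for all $y,x,x',\lambda$. The $(l,h,\epsilon_A,\epsilon_B)$-MDPDL set is the set of joint distributions $p(abxy)=\int q(d\lambda)\,p_{XY|\Lambda}(xy|\lambda)\,p_A(a|xy\lambda)\,p_B(b|xy\lambda)$ with $l\le p_{XY|\Lambda}(xy|\lambda)\le h$ for all $x,y,\lambda$ and $p_A,p_B$ satisfying the same two total-variation constraints. *)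

theory Defs
  imports "HOL-Probability.Probability"
begin

text \<open>Conditional distributions are functions p a b x y = p(ab|xy) on finite alphabets.
  The hidden-variable probability space (Lambda, q) is modelled as a probability measure on
  the reals; the local response functions are (measurable) families of probability vectors.\<close>

definition is_distr :: "('a::finite \<Rightarrow> real) \<Rightarrow> bool" where
  "is_distr f \<longleftrightarrow> (\<forall>a. 0 \<le> f a) \<and> (\<Sum>a\<in>UNIV. f a) = 1"

definition P2 :: "real \<Rightarrow> real \<Rightarrow>
    ('a::finite \<Rightarrow> 'b::finite \<Rightarrow> 'x::finite \<Rightarrow> 'y::finite \<Rightarrow> real) \<Rightarrow> bool" where
  "P2 epsA epsB p \<longleftrightarrow>
    (\<exists>(q::real measure) (pA :: 'x \<Rightarrow> 'y \<Rightarrow> real \<Rightarrow> 'a \<Rightarrow> real)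
                        (pB :: 'x \<Rightarrow> 'y \<Rightarrow> real \<Rightarrow> 'b \<Rightarrow> real).
       prob_space q \<and>
       (\<forall>x y a. (\<lambda>l. pA x y l a) \<in> borel_measurable q) \<and>
       (\<forall>x y b. (\<lambda>l. pB x y l b) \<in> borel_measurable q) \<and>
       (\<forall>x y l. is_distr (pA x y l) \<and> is_distr (pB x y l)) \<and>
       (\<forall>a b x y. p a b x y = (\<integral>l. pA x y l a * pB x y l b \<partial>q)) \<and>
       (\<forall>x y y' l. (1/2) * (\<Sum>a\<in>UNIV. \<bar>pA x y l a - pA x y' l a\<bar>) \<le> epsA) \<and>
       (\<forall>y x x' l. (1/2) * (\<Sum>b\<in>UNIV. \<bar>pB x y l b - pB x' y l b\<bar>) \<le> epsB))"

definition MDPDL :: "real \<Rightarrow> real \<Rightarrow> real \<Rightarrow> real \<Rightarrow>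
    ('a::finite \<Rightarrow> 'b::finite \<Rightarrow> 'x::finite \<Rightarrow> 'y::finite \<Rightarrow> real) \<Rightarrow> bool" where
  "MDPDL lo hi epsA epsB P \<longleftrightarrow>
    (\<exists>(q::real measure) (pXY :: real \<Rightarrow> 'x \<times> 'y \<Rightarrow> real)
                        (pA :: 'x \<Rightarrow> 'y \<Rightarrow> real \<Rightarrow> 'a \<Rightarrow> real)
                        (pB :: 'x \<Rightarrow> 'y \<Rightarrow> real \<Rightarrow> 'b \<Rightarrow> real).
       prob_space q \<and>
       (\<forall>x y. (\<lambda>l. pXY l (x, y)) \<in> borel_measurable q) \<and>
       (\<forall>x y a. (\<lambda>l. pA x y l a) \<in> borel_measurable q) \<and>
       (\<forall>x y b. (\<lambda>l. pB x y l b) \<in> borel_measurable q) \<and>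
       (\<forall>l. is_distr (pXY l)) \<and>
       (\<forall>x y l. lo \<le> pXY l (x, y) \<and> pXY l (x, y) \<le> hi) \<and>
       (\<forall>x y l. is_distr (pA x y l) \<and> is_distr (pB x y l)) \<and>
       (\<forall>a b x y. P a b x y = (\<integral>l. pXY l (x, y) * pA x y l a * pB x y l b \<partial>q)) \<and>
       (\<forall>x y y' l. (1/2) * (\<Sum>a\<in>UNIV. \<bar>pA x y l a - pA x y' l a\<bar>) \<le> epsA) \<and>
       (\<forall>y x x' l. (1/2) * (\<Sum>b\<in>UNIV. \<bar>pB x y l b - pB x' y l b\<bar>) \<le> epsB))"

text \<open>The binary alphabet {0,1} is encoded as bool with False = 0, True = 1.
  pH a b x y = p^H(ab|xy).\<close>
definition pH :: "bool \<Rightarrow> bool \<Rightarrow> bool \<Rightarrow> bool \<Rightarrow> real" where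
  "pH a b x y =
    (     if \<not> x \<and> \<not> y then
       (if \<not> a \<and> \<not> b then (5 * sqrt 5 - 11)/2
        else if \<not> a \<and> b then (7 - 3 * sqrt 5)/2
        else if a \<and> \<not> b then (7 - 3 * sqrt 5)/2
        else (sqrt 5 - 1)/2)
     else if \<not> x \<and> y then
       (if \<not> a \<and> \<not> b then sqrt 5 - 2
        else if \<not> a \<and> b then 0
        else if a \<and> \<not> b then (7 - 3 * sqrt 5)/2
        else (sqrt 5 - 1)/2)
     else if x \<and> \<not> y then
       (if \<not> a \<and> \<not> b then sqrt 5 - 2
        else if \<not> a \<and> b then (7 - 3 * sqrt 5)/2
        else if a \<and> \<not> b then 0
        else (sqrt 5 - 1)/2)
     else
       (if \<not> a \<and> \<not> b then 0
        else if \<not> a \<and> b then (3 - sqrt 5)/2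
        else if a \<and> \<not> b then (3 - sqrt 5)/2
        else sqrt 5 - 2))"

end

theory Submission
  imports Defs
begin

definition alA :: "real \<Rightarrow> bool \<Rightarrow> bool \<Rightarrow> real" where
  "alA l x y = (if l = 1 then (if x then (if y then 0 else 0) else (if y then 1 else 3/4))
    else if l = 2 then (if x then (if y then 0 else 0) else (if y then 1 else 1))
    else if l = 3 then (if x then (if y then 1 else 1) else (if y then 0 else 0))
    else if l = 4 then (if x then (if y then 1 else 1) else (if y then 0 else 1/4))
    else if l = 5 then (if x then (if y then 0 else 0) else (if y then 1 else 1))
    else if l = 6 then (if x then (if y then 1 else 1) else (if y then 1 else 1))
    else if l = 7 then (if x then (if y then 1 else 1) else (if y then 1 else 1))
    else if l = 8 then (if x then (if y then 0 else 0) else (if y then 1 else 3/4))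
    else 0)"

definition beB :: "real \<Rightarrow> bool \<Rightarrow> bool \<Rightarrow> real" where
  "beB l x y = (if l = 1 then (if y then (if x then 1 else 1) else (if x then 0 else 1/4))
    else if l = 2 then (if y then (if x then 1 else 1) else (if x then 3/4 else 1))
    else if l = 3 then (if y then (if x then 0 else 0) else (if x then 1 else 3/4))
    else if l = 4 then (if y then (if x then 0 else 0) else (if x then 1 else 3/4))
    else if l = 5 then (if y then (if x then 1 else 1) else (if x then 0 else 1/4))
    else if l = 6 then (if y then (if x then 0 else 0) else (if x then 1 else 1))
    else if l = 7 then (if y then (if x then 1 else 1) else (if x then 1 else 1))
    else if l = 8 then (if y then (if x then 1 else 1) else (if x then 0 else 0))
    else 0)"

definition pAH :: "bool \<Rightarrow> bool \<Rightarrow> real \<Rightarrow> bool \<Rightarrow> real" where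
  "pAH x y l a = (if a then alA l x y else 1 - alA l x y)"

definition pBH :: "bool \<Rightarrow> bool \<Rightarrow> real \<Rightarrow> bool \<Rightarrow> real" where
  "pBH x y l b = (if b then beB l x y else 1 - beB l x y)"

definition wl :: "(real \<times> real) list" where
  "wl = [(1, (81 * sqrt 5 - 181)/4), (2, 14/3 - 2 * sqrt 5), (3, (159 - 71 * sqrt 5)/4),
         (4, (75 * sqrt 5 - 167)/4), (5, 463/12 - 69 * sqrt 5 / 4), (6, (7 - 3 * sqrt 5)/2),
         (7, sqrt 5 - 2), (8, (7 - 3 * sqrt 5)/2)]"

definition qH :: "real measure" where
  "qH = measure_pmf (pmf_of_list wl)"

lemma sqrt5_lo: "2.236 < sqrt (5::real)"
  by (rule real_less_rsqrt) (simp add: power2_eq_square)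

lemma sqrt5_hi: "sqrt (5::real) < 2.2361"
proof -
  have "sqrt (5::real) < sqrt (2.2361^2)" by (subst real_sqrt_less_iff) (simp add: power2_eq_square)
  then show ?thesis by simp
qed

lemma wl_wf: "pmf_of_list_wf wl"
  unfolding pmf_of_list_wf_def wl_def using sqrt5_lo sqrt5_hi by (auto simp: field_simps)

lemma int_qH: "(\<integral>l. f l \<partial>qH) =
   f 1 * ((81 * sqrt 5 - 181)/4) + f 2 * (14/3 - 2 * sqrt 5) + f 3 * ((159 - 71 * sqrt 5)/4)
 + f 4 * ((75 * sqrt 5 - 167)/4) + f 5 * (463/12 - 69 * sqrt 5 / 4) + f 6 * ((7 - 3 * sqrt 5)/2)
 + f 7 * (sqrt 5 - 2) + f 8 * ((7 - 3 * sqrt 5)/2)"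
proof -
  have "(\<integral>l. f l \<partial>qH) = (\<Sum>a\<in>{1,2,3,4,5,6,7,8}. f a * pmf (pmf_of_list wl) a)"
    unfolding qH_def
    apply (rule integral_measure_pmf_real)
    using set_pmf_of_list[OF wl_wf] by (auto simp: wl_def)
  then show ?thesis
    unfolding pmf_pmf_of_list[OF wl_wf] by (simp add: wl_def)
qed

lemma probq: "prob_space qH"
  unfolding qH_def by (rule prob_space_measure_pmf)

lemma distrs: "is_distr (pAH x y l)" "is_distr (pBH x y l)"
  unfolding is_distr_def pAH_def pBH_def alA_def beB_def UNIV_bool by auto

lemma tvA: "(1/2) * (\<Sum>a\<in>UNIV. \<bar>pAH x y l a - pAH x y' l a\<bar>) \<le> 1/4"
  unfolding pAH_def alA_def UNIV_bool by (cases x; cases y; cases y'; simp)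

lemma tvB: "(1/2) * (\<Sum>b\<in>UNIV. \<bar>pBH x y l b - pBH x' y l b\<bar>) \<le> 1/4"
  unfolding pBH_def beB_def UNIV_bool by (cases x; cases y; cases x'; simp)

lemma decomp: "pH a b x y = (\<integral>l. pAH x y l a * pBH x y l b \<partial>qH)"
  unfolding int_qH pAH_def pBH_def alA_def beB_def pH_def
  by (cases a; cases b; cases x; cases y; simp add: field_simps)

lemma P2H: "P2 (1/4) (1/4) pH"
  unfolding P2_def
  apply (rule exI[of _ qH], rule exI[of _ pAH], rule exI[of _ pBH])
  using probq distrs tvA tvB decomp by (simp add: qH_def)

theorem mainTheorem5:
  shows "P2 (1/4) (1/4) pH \<and>
    (\<forall>(lo::real) (hi::real) (pXY :: bool \<times> bool \<Rightarrow> real).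
       0 < lo \<and> lo \<le> hi \<and> is_distr pXY \<and> (\<forall>xy. lo \<le> pXY xy \<and> pXY xy \<le> hi) \<longrightarrow>
       MDPDL lo hi (1/4) (1/4) (\<lambda>a b x y. pXY (x, y) * pH a b x y))"
proof (intro conjI allI impI)
  show "P2 (1/4) (1/4) pH" by (rule P2H)
next
  fix lo hi :: real and pXY :: "bool \<times> bool \<Rightarrow> real"
  assume h: "0 < lo \<and> lo \<le> hi \<and> is_distr pXY \<and> (\<forall>xy. lo \<le> pXY xy \<and> pXY xy \<le> hi)"
  have e: "pXY (x, y) * pH a b x y = (\<integral>l. pXY (x, y) * pAH x y l a * pBH x y l b \<partial>qH)"
    for a b x y
    unfolding decomp mult.assoc by simp
  show "MDPDL lo hi (1/4) (1/4) (\<lambda>a b x y. pXY (x, y) * pH a b x y)"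
    unfolding MDPDL_def
    apply (rule exI[of _ qH], rule exI[of _ "\<lambda>_. pXY"], rule exI[of _ pAH], rule exI[of _ pBH])
    using probq distrs tvA tvB e h by (simp add: qH_def)
qed

end
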